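(* Let $K,L\subseteq S$ with $k<l$ for all $k\in K$, $l\in L$. Then in $A$: $$\tau^-_K\tau^-_L=\sum_{i=1}^{\#K}(-1)^{\#K-i}\tau^-_{(K\cup L)\setminus\{k_i\}}=\sum_{i=1}^{\#L}(-1)^{i-1}\tau^-_{(K\cup L)\setminus\{l_i\}}.$$
   Context: $S$ is a finite set with a total order $<$, $R$ a commutative ring with $1$, $q\in R$, $A=R\langle t_s\mid s\in S\rangle$ the free associative algebra. Subsets are enumerated increasingly, $K=\{k_1<\dots<k_{\#K}\}$, etc. For $J=\{j_1<\dots<j_{\#J}\}$, $t_J=t_{j_1}\cdots t_{j_{\#J}}$; for $I=\{j_{\alpha_1}<\dots<j_{\alpha_{\#I}}\}\subseteq J$, $\ell_J(I)=\sum_\nu(\alpha_\nu-\nu)$; $\tau^-_J=\sum_{I\subseteq J,\ \#I\text{ odd}}(-1)^{\ell_J(I)}(-q)^{(\#I-1)/2}t_{J\setminus I}$. *)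

theory Defs
  imports Main
begin

text \<open>The free associative algebra R<t_s | s in S> is represented by coefficient functions
  on words ('s list => 'r); it embeds injectively (as the finitely supported functions)
  into the noncommutative formal power series ring, whose product is the convolution below.\<close>

definition mon :: "'s list \<Rightarrow> ('s list \<Rightarrow> 'r::comm_ring_1)" where
  "mon v = (\<lambda>w. if w = v then 1 else 0)"

definition nc_mult :: "('s list \<Rightarrow> 'r::comm_ring_1) \<Rightarrow> ('s list \<Rightarrow> 'r) \<Rightarrow> ('s list \<Rightarrow> 'r)" where
  "nc_mult f g = (\<lambda>w. \<Sum>i\<le>length w. f (take i w) * g (drop i w))"

definition tJ :: "'s::linorder set \<Rightarrow> ('s list \<Rightarrow> 'r::comm_ring_1)" where
  "tJ J = mon (sorted_list_of_set J)"

text \<open>Position (1-based) of x in J.\<close>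
definition pos :: "'s::linorder set \<Rightarrow> 's \<Rightarrow> nat" where
  "pos J x = card {j \<in> J. j \<le> x}"

definition ell :: "'s::linorder set \<Rightarrow> 's set \<Rightarrow> nat" where
  "ell J I = (\<Sum>\<nu><card I. pos J (sorted_list_of_set I ! \<nu>) - (\<nu> + 1))"

definition tau_minus :: "'r::comm_ring_1 \<Rightarrow> 's::linorder set \<Rightarrow> ('s list \<Rightarrow> 'r)" where
  "tau_minus q J = (\<lambda>w. \<Sum>I\<in>{I. I \<subseteq> J \<and> odd (card I)}.
      (-1) ^ ell J I * (- q) ^ ((card I - 1) div 2) * tJ (J - I) w)"

end

theory Submission imports Defs begin

lemma tJ_eq: "tJ (A::'s::{linorder,finite} set) w = (if sorted_wrt (<) w \<and> set w = A then 1 else 0)"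
proof -
  have "sorted_list_of_set A = w \<longleftrightarrow> sorted_wrt (<) w \<and> set w = A"
    by (metis finite sorted_list_of_set.set_sorted_key_list_of_set sorted_list_of_set.strict_sorted_key_list_of_set strict_sorted_equal subset_UNIV)
  then show ?thesis unfolding tJ_def mon_def by auto
qed

lemma tau_val: "tau_minus q (J::'s::{linorder,finite} set) w =
  (if sorted_wrt (<) w \<and> set w \<subseteq> J \<and> odd (card (J - set w)) then
     (-1) ^ ell J (J - set w) * (- q) ^ ((card (J - set w) - 1) div 2) else 0)"
proof -
  let ?S = "{I. I \<subseteq> J \<and> odd (card I)}"
  let ?f = "\<lambda>I. (-1) ^ ell J I * (- q) ^ ((card I - 1) div 2)"
  have "tau_minus q J w = (\<Sum>I\<in>?S. if I = J - set w then (if sorted_wrt (<) w \<and> set w \<subseteq> J then ?f I else 0) else 0)"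
    unfolding tau_minus_def tJ_eq
    by (rule sum.cong) auto
  also have "\<dots> = (if J - set w \<in> ?S then (if sorted_wrt (<) w \<and> set w \<subseteq> J then ?f (J - set w) else 0) else 0)"
    by (rule sum.delta) simp
  finally show ?thesis by auto
qed

lemma rank: "\<nu> < card (I::'s::{linorder,finite} set) \<Longrightarrow> card {j\<in>I. j \<le> sorted_list_of_set I ! \<nu>} = Suc \<nu>"
proof -
  assume a: "\<nu> < card I"
  let ?s = "sorted_list_of_set I"
  have ss: "sorted_wrt (<) ?s" by simp
  have len: "length ?s = card I" by simp
  have "{j\<in>I. j \<le> ?s ! \<nu>} = (nth ?s) ` {..\<nu>}"
  proof (intro equalityI subsetI)
    fix j assume "j \<in> {j\<in>I. j \<le> ?s ! \<nu>}"
    then have j: "j \<in> I" "j \<le> ?s ! \<nu>" by auto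
    then obtain m where m: "m < length ?s" "j = ?s ! m" by (metis finite in_set_conv_nth sorted_list_of_set.set_sorted_key_list_of_set)
    have "m \<le> \<nu>"
    proof (rule ccontr)
      assume "\<not> m \<le> \<nu>"
      then have "?s ! \<nu> < ?s ! m" using sorted_wrt_nth_less[OF ss] m by simp
      then show False using j m by simp
    qed
    then show "j \<in> (nth ?s) ` {..\<nu>}" using m by auto
  next
    fix j assume "j \<in> (nth ?s) ` {..\<nu>}"
    then obtain m where m: "m \<le> \<nu>" "j = ?s ! m" by auto
    then have "m < length ?s" using a len by auto
    then have "?s ! m \<in> set ?s" by (rule nth_mem)
    then have "j \<in> I" using m by simp
    moreover have "?s ! m \<le> ?s ! \<nu>"
    proof (cases "m = \<nu>")
      case False then show ?thesis using sorted_wrt_nth_less[OF ss, of m \<nu>] m a len by auto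
    qed simp
    ultimately show "j \<in> {j\<in>I. j \<le> ?s ! \<nu>}" using m by simp
  qed
  moreover have "inj_on (nth ?s) {..\<nu>}"
    using a len by (intro inj_onI) (auto simp: nth_eq_iff_index_eq)
  ultimately show ?thesis by (simp add: card_image)
qed

lemma sum_sorted: "(\<Sum>\<nu><card (I::'s::{linorder,finite} set). h (sorted_list_of_set I ! \<nu>)) = (\<Sum>x\<in>I. h x)"
  by (rule sum.reindex_bij_betw[OF bij_betw_nth]) simp_all

lemma ell_alt:
  assumes "I \<subseteq> (J::'s::{linorder,finite} set)"
  shows "ell J I = (\<Sum>x\<in>I. card {j\<in>J-I. j<x})"
proof -
  let ?s = "sorted_list_of_set I"
  have "ell J I = (\<Sum>\<nu><card I. card {j\<in>J-I. j < ?s ! \<nu>})"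
    unfolding ell_def
  proof (rule sum.cong)
    fix \<nu> assume "\<nu> \<in> {..<card I}"
    then have nu: "\<nu> < card I" by simp
    then have "?s ! \<nu> \<in> set ?s" by (intro nth_mem) simp
    then have xI: "?s ! \<nu> \<in> I" by simp
    have "{j\<in>J. j \<le> ?s ! \<nu>} = {j\<in>I. j \<le> ?s ! \<nu>} \<union> {j\<in>J-I. j < ?s ! \<nu>}"
      using assms xI by (auto simp: le_less)
    then have "pos J (?s ! \<nu>) = card {j\<in>I. j \<le> ?s ! \<nu>} + card {j\<in>J-I. j < ?s ! \<nu>}"
      unfolding pos_def by (simp add: card_Un_disjoint disjoint_iff)
    then show "pos J (?s ! \<nu>) - (\<nu> + 1) = card {j\<in>J-I. j < ?s ! \<nu>}"
      using rank[OF nu] by simp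
  qed simp
  also have "\<dots> = (\<Sum>x\<in>I. card {j\<in>J-I. j<x})" by (rule sum_sorted)
  finally show ?thesis .
qed

lemma reindex_K:
  "(\<Sum>i=1..card (K::'s::{linorder,finite} set). F i (sorted_list_of_set K ! (i - 1))) = (\<Sum>k\<in>K. F (pos K k) k)"
proof -
  have "(\<Sum>i=1..card K. F i (sorted_list_of_set K ! (i - 1))) = (\<Sum>\<nu><card K. F (Suc \<nu>) (sorted_list_of_set K ! \<nu>))"
    by (simp add: sum.atLeast1_atMost_eq)
  also have "\<dots> = (\<Sum>\<nu><card K. F (pos K (sorted_list_of_set K ! \<nu>)) (sorted_list_of_set K ! \<nu>))"
    by (rule sum.cong) (simp_all add: pos_def rank)
  also have "\<dots> = (\<Sum>k\<in>K. F (pos K k) k)" by (rule sum_sorted)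
  finally show ?thesis .
qed

lemma alt_gt:
  fixes A :: "'a::linorder set"
  assumes "finite A"
  shows "(\<Sum>k\<in>A. (-1::'r::comm_ring_1) ^ card {x\<in>A. k<x}) = (if odd (card A) then 1 else 0)"
  using assms
proof (induction A rule: finite_linorder_max_induct)
  case empty then show ?case by simp
next
  case (insert b A)
  have bA: "b \<notin> A" using insert by auto
  have 1: "{x\<in>insert b A. b<x} = {}" using insert by auto
  have 2: "\<And>k. k \<in> A \<Longrightarrow> card {x\<in>insert b A. k<x} = Suc (card {x\<in>A. k<x})"
  proof -
    fix k assume "k \<in> A"
    then have "{x\<in>insert b A. k<x} = insert b {x\<in>A. k<x}" using insert by auto
    then show "card {x\<in>insert b A. k<x} = Suc (card {x\<in>A. k<x})" using bA insert by simp
  qed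
  have "(\<Sum>k\<in>insert b A. (-1::'r) ^ card {x\<in>insert b A. k<x}) = 1 + (\<Sum>k\<in>A. (-1::'r) ^ card {x\<in>insert b A. k<x})"
    using sum.insert[OF insert(1) bA, of "\<lambda>k. (-1::'r) ^ card {x\<in>insert b A. k<x}"] by (simp only: 1 card.empty power_0)
  also have "(\<Sum>k\<in>A. (-1::'r) ^ card {x\<in>insert b A. k<x}) = - (\<Sum>k\<in>A. (-1::'r) ^ card {x\<in>A. k<x})"
    unfolding sum_negf[symmetric]
  proof (rule sum.cong[OF refl])
    fix k assume "k \<in> A"
    from 2[OF this] show "(-1::'r) ^ card {x\<in>insert b A. k<x} = - ((-1) ^ card {x\<in>A. k<x})" by simp
  qed
  finally show ?case using insert bA by simp
qed

lemma alt_lt: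
  fixes A :: "'a::linorder set"
  assumes "finite A"
  shows "(\<Sum>k\<in>A. (-1::'r::comm_ring_1) ^ card {x\<in>A. x<k}) = (if odd (card A) then 1 else 0)"
  using assms
proof (induction A rule: finite_linorder_min_induct)
  case empty then show ?case by simp
next
  case (insert b A)
  have bA: "b \<notin> A" using insert by auto
  have 1: "{x\<in>insert b A. x<b} = {}" using insert by auto
  have 2: "\<And>k. k \<in> A \<Longrightarrow> card {x\<in>insert b A. x<k} = Suc (card {x\<in>A. x<k})"
  proof -
    fix k assume "k \<in> A"
    then have "{x\<in>insert b A. x<k} = insert b {x\<in>A. x<k}" using insert by auto
    then show "card {x\<in>insert b A. x<k} = Suc (card {x\<in>A. x<k})" using bA insert by simp
  qed
  have "(\<Sum>k\<in>insert b A. (-1::'r) ^ card {x\<in>insert b A. x<k}) = 1 + (\<Sum>k\<in>A. (-1::'r) ^ card {x\<in>insert b A. x<k})"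
    using sum.insert[OF insert(1) bA, of "\<lambda>k. (-1::'r) ^ card {x\<in>insert b A. x<k}"] by (simp only: 1 card.empty power_0)
  also have "(\<Sum>k\<in>A. (-1::'r) ^ card {x\<in>insert b A. x<k}) = - (\<Sum>k\<in>A. (-1::'r) ^ card {x\<in>A. x<k})"
    unfolding sum_negf[symmetric]
  proof (rule sum.cong[OF refl])
    fix k assume "k \<in> A"
    from 2[OF this] show "(-1::'r) ^ card {x\<in>insert b A. x<k} = - ((-1) ^ card {x\<in>A. x<k})" by simp
  qed
  finally show ?case using insert bA by simp
qed

definition Tc :: "'r::comm_ring_1 \<Rightarrow> 's::linorder set \<Rightarrow> 's set \<Rightarrow> 'r" where
  "Tc q J U = (if odd (card U) then (-1::'r) ^ ell J U * (-q) ^ ((card U - 1) div 2) else 0)"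

lemma sgn_eq: "a + 2 * c = b \<Longrightarrow> (-1::'r::comm_ring_1) ^ a = (-1) ^ b"
  by (auto simp: power_add power_mult)

lemma core:
  fixes K L M :: "'s::{linorder,finite} set" and q :: "'r::comm_ring_1"
  assumes KL: "\<forall>k\<in>K. \<forall>l\<in>L. k<l" and MJ: "M \<subseteq> K \<union> L"
  defines "T \<equiv> Tc q"
  shows "T K (K-M) * T L (L-M) = (\<Sum>k\<in>K. (-1) ^ (card K - pos K k) *
            (if M \<subseteq> K \<union> L - {k} then T (K \<union> L - {k}) (K \<union> L - {k} - M) else 0))"
    and "T K (K-M) * T L (L-M) = (\<Sum>l\<in>L. (-1) ^ (pos L l - 1) *
            (if M \<subseteq> K \<union> L - {l} then T (K \<union> L - {l}) (K \<union> L - {l} - M) else 0))"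
proof -
  define J where "J = K \<union> L"
  define U where "U = J - M"
  define UK where "UK = K - M"
  define UL where "UL = L - M"
  define MK where "MK = K \<inter> M"
  define g where "g = (\<lambda>x. card {j\<in>M. j<x})"
  define G where "G = (\<Sum>x\<in>U. g x)"
  define V where "V = (if odd (card U - 1) then (-1::'r) ^ (card MK + G) * (-q) ^ ((card U - 1 - 1) div 2) else 0)"
  have disj: "K \<inter> L = {}" using KL by auto
  have Usplit: "U = UK \<union> UL" "UK \<inter> UL = {}" using disj unfolding U_def UK_def UL_def J_def by auto
  have cardU: "card U = card UK + card UL" using Usplit by (simp add: card_Un_disjoint)
  have gK: "\<And>x. x \<in> K \<Longrightarrow> g x = card {j\<in>MK. j<x}"
  proof -
    fix x assume x: "x \<in> K"
    have "{j\<in>M. j<x} = {j\<in>MK. j<x}" using x KL MJ unfolding MK_def by fastforce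
    then show "g x = card {j\<in>MK. j<x}" unfolding g_def by simp
  qed
  have gL: "\<And>x. x \<in> L \<Longrightarrow> g x = card MK + card {j\<in>L \<inter> M. j<x}"
  proof -
    fix x assume x: "x \<in> L"
    have "{j\<in>M. j<x} = MK \<union> {j\<in>L \<inter> M. j<x}" using x KL MJ unfolding MK_def by fastforce
    moreover have "MK \<inter> {j\<in>L \<inter> M. j<x} = {}" using disj unfolding MK_def by auto
    ultimately show "g x = card MK + card {j\<in>L \<inter> M. j<x}" unfolding g_def by (simp add: card_Un_disjoint)
  qed
  have ellK: "ell K UK = (\<Sum>x\<in>UK. g x)"
  proof -
    have "ell K UK = (\<Sum>x\<in>UK. card {j\<in>K-UK. j<x})" by (rule ell_alt) (auto simp: UK_def)
    also have "\<dots> = (\<Sum>x\<in>UK. g x)"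
    proof (rule sum.cong[OF refl])
      fix x assume "x \<in> UK"
      then have "x \<in> K" by (simp add: UK_def)
      moreover have "K - UK = MK" by (auto simp: UK_def MK_def)
      ultimately show "card {j\<in>K-UK. j<x} = g x" using gK by simp
    qed
    finally show ?thesis .
  qed
  have ellL: "ell L UL + card UL * card MK = (\<Sum>x\<in>UL. g x)"
  proof -
    have "ell L UL = (\<Sum>x\<in>UL. card {j\<in>L-UL. j<x})" by (rule ell_alt) (auto simp: UL_def)
    moreover have "(\<Sum>x\<in>UL. g x) = (\<Sum>x\<in>UL. card {j\<in>L-UL. j<x} + card MK)"
    proof (rule sum.cong[OF refl])
      fix x assume "x \<in> UL"
      then have "x \<in> L" by (simp add: UL_def)
      moreover have "L - UL = L \<inter> M" by (auto simp: UL_def)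
      ultimately show "g x = card {j\<in>L-UL. j<x} + card MK" using gL by simp
    qed
    ultimately show ?thesis by (simp add: sum.distrib)
  qed
  have GG: "G = ell K UK + ell L UL + card UL * card MK"
    using ellK ellL Usplit unfolding G_def by (simp add: sum.union_disjoint)
  have LHS: "T K (K-M) * T L (L-M) = (if odd (card UK) \<and> odd (card UL) then (-1) ^ (G + card MK) * (-q) ^ ((card U - 1 - 1) div 2) else 0)"
  proof (cases "odd (card UK) \<and> odd (card UL)")
    case True
    then obtain p r where p: "card UK = 2*p+1" and r: "card UL = 2*r+1" by (meson oddE)
    have e: "(card U - 1 - 1) div 2 = p + r" using cardU p r by simp
    have sg: "(-1::'r) ^ (ell K UK + ell L UL) = (-1) ^ (G + card MK)"
      by (rule sgn_eq[where c = "(r+1) * card MK"]) (simp add: GG r algebra_simps)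
    have sg': "(-1::'r) ^ ell K UK * (-1) ^ ell L UL = (-1) ^ G * (-1) ^ card MK"
      using sg by (simp add: power_add)
    show ?thesis using True unfolding T_def Tc_def UK_def[symmetric] UL_def[symmetric] e
      apply (simp add: p r power_add)
      apply (subst sg'[symmetric])
      apply (simp add: mult_ac)
      done
  next
    case False
    then show ?thesis unfolding T_def Tc_def UK_def[symmetric] UL_def[symmetric] by auto
  qed
  have common: "\<And>k. k \<in> U \<Longrightarrow> T (J-{k}) (J-{k}-M) = (if odd (card U - 1) then (-1) ^ (\<Sum>x\<in>U-{k}. g x) * (-q) ^ ((card U - 1 - 1) div 2) else 0)"
  proof -
    fix k assume kU: "k \<in> U"
    then have kM: "k \<notin> M" by (simp add: U_def)
    have set1: "J - {k} - M = U - {k}" by (auto simp: U_def)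
    have set2: "J - {k} - (U - {k}) = M" using MJ kM by (auto simp: U_def J_def)
    have E: "ell (J-{k}) (U-{k}) = (\<Sum>x\<in>U-{k}. g x)"
    proof -
      have "U - {k} \<subseteq> J - {k}" by (auto simp: U_def)
      from ell_alt[OF this] show ?thesis by (simp only: set2 g_def)
    qed
    have cardUk: "card (U - {k}) = card U - 1" using kU by simp
    show "T (J-{k}) (J-{k}-M) = (if odd (card U - 1) then (-1) ^ (\<Sum>x\<in>U-{k}. g x) * (-q) ^ ((card U - 1 - 1) div 2) else 0)"
      unfolding T_def Tc_def set1 cardUk E ..
  qed
  have EG: "\<And>k. k \<in> U \<Longrightarrow> (\<Sum>x\<in>U-{k}. g x) + g k = G"
  proof -
    fix k assume "k \<in> U"
    from sum.remove[OF finite this, of g] show "(\<Sum>x\<in>U-{k}. g x) + g k = G" by (simp add: G_def)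
  qed
  have term1: "\<And>k. k \<in> K \<Longrightarrow> (-1) ^ (card K - pos K k) * (if M \<subseteq> J - {k} then T (J-{k}) (J-{k}-M) else 0)
      = (if k \<in> UK then (-1) ^ card {x\<in>UK. k<x} * V else 0)"
  proof -
    fix k assume k: "k \<in> K"
    show "(-1) ^ (card K - pos K k) * (if M \<subseteq> J - {k} then T (J-{k}) (J-{k}-M) else 0)
      = (if k \<in> UK then (-1) ^ card {x\<in>UK. k<x} * V else 0)"
    proof (cases "k \<in> M")
      case True then show ?thesis by (auto simp: UK_def)
    next
      case False
      then have kU: "k \<in> UK" "k \<in> U" using k by (auto simp: UK_def U_def J_def)
      have MJk: "M \<subseteq> J - {k}" using MJ False J_def by auto
      have c1: "card K = card UK + card MK"
      proof -
        have "K = UK \<union> MK" "UK \<inter> MK = {}" by (auto simp: UK_def MK_def)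
        then show ?thesis by (metis card_Un_disjoint finite)
      qed
      have c2: "pos K k = card {j\<in>UK. j\<le>k} + g k"
      proof -
        have "{j\<in>K. j\<le>k} = {j\<in>UK. j\<le>k} \<union> {j\<in>MK. j<k}" "{j\<in>UK. j\<le>k} \<inter> {j\<in>MK. j<k} = {}"
          using False by (auto simp: UK_def MK_def le_less)
        then show ?thesis unfolding pos_def gK[OF k] by (metis card_Un_disjoint finite)
      qed
      have c3: "card UK = card {j\<in>UK. j\<le>k} + card {x\<in>UK. k<x}"
      proof -
        have "UK = {j\<in>UK. j\<le>k} \<union> {x\<in>UK. k<x}" "{j\<in>UK. j\<le>k} \<inter> {x\<in>UK. k<x} = {}" by auto
        then show ?thesis by (metis card_Un_disjoint finite)
      qed
      have c4: "g k \<le> card MK" unfolding gK[OF k] by (rule card_mono) auto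
      have ex: "(-1::'r) ^ (card K - pos K k + (\<Sum>x\<in>U-{k}. g x)) = (-1) ^ (card {x\<in>UK. k<x} + (card MK + G))"
        by (rule sgn_eq[where c="g k"]) (use c1 c2 c3 c4 EG[OF kU(2)] in linarith)
      have ex': "(-1::'r) ^ (card K - pos K k) * (-1) ^ (\<Sum>x\<in>U-{k}. g x) = (-1) ^ card {x\<in>UK. k<x} * (-1) ^ (card MK + G)"
        using ex by (simp only: power_add)
      show ?thesis
      proof (cases "odd (card U - 1)")
        case True
        show ?thesis using MJk kU True unfolding common[OF kU(2)] V_def
          apply simp
          apply (subst mult.assoc[symmetric])
          apply (subst ex')
          apply (simp add: mult_ac)
          done
      next
        case False
        show ?thesis using MJk kU False unfolding common[OF kU(2)] V_def by simp
      qed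
    qed
  qed
  have "(\<Sum>k\<in>K. (-1) ^ (card K - pos K k) * (if M \<subseteq> J - {k} then T (J-{k}) (J-{k}-M) else 0))
      = (\<Sum>k\<in>K. if k \<in> UK then (-1) ^ card {x\<in>UK. k<x} * V else 0)"
    by (rule sum.cong[OF refl]) (rule term1)
  also have "\<dots> = (\<Sum>k\<in>K \<inter> UK. (-1) ^ card {x\<in>UK. k<x} * V)"
    by (simp add: sum.inter_restrict)
  also have "K \<inter> UK = UK" by (auto simp: UK_def)
  also have "(\<Sum>k\<in>UK. (-1) ^ card {x\<in>UK. k<x} * V) = (if odd (card UK) then 1 else 0) * V"
    by (simp add: sum_distrib_right[symmetric] alt_gt)
  finally have R1: "(\<Sum>k\<in>K. (-1) ^ (card K - pos K k) * (if M \<subseteq> J - {k} then T (J-{k}) (J-{k}-M) else 0))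
      = (if odd (card UK) then 1 else 0) * V" .
  show "T K (K-M) * T L (L-M) = (\<Sum>k\<in>K. (-1) ^ (card K - pos K k) *
            (if M \<subseteq> K \<union> L - {k} then T (K \<union> L - {k}) (K \<union> L - {k} - M) else 0))"
    unfolding J_def[symmetric] R1 LHS V_def
  proof (cases "odd (card UK)")
    case True
    then have "odd (card U - 1) \<longleftrightarrow> odd (card UL)" using cardU by (auto elim!: oddE)
    then show "(if odd (card UK) \<and> odd (card UL) then (-1) ^ (G + card MK) * (-q) ^ ((card U - 1 - 1) div 2) else 0) =
      (if odd (card UK) then 1 else 0) * (if odd (card U - 1) then (-1) ^ (card MK + G) * (-q) ^ ((card U - 1 - 1) div 2) else 0)"
      using True by (simp add: add.commute)
  qed simp
  show "T K (K-M) * T L (L-M) = (\<Sum>l\<in>L. (-1) ^ (pos L l - 1) *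
            (if M \<subseteq> K \<union> L - {l} then T (K \<union> L - {l}) (K \<union> L - {l} - M) else 0))"
  proof -
  have term2: "\<And>l. l \<in> L \<Longrightarrow> (-1) ^ (pos L l - 1) * (if M \<subseteq> J - {l} then T (J-{l}) (J-{l}-M) else 0)
      = (if l \<in> UL then (-1) ^ card {x\<in>UL. x<l} * V else 0)"
  proof -
    fix l assume l: "l \<in> L"
    show "(-1) ^ (pos L l - 1) * (if M \<subseteq> J - {l} then T (J-{l}) (J-{l}-M) else 0)
      = (if l \<in> UL then (-1) ^ card {x\<in>UL. x<l} * V else 0)"
    proof (cases "l \<in> M")
      case True then show ?thesis by (auto simp: UL_def)
    next
      case False
      then have lU: "l \<in> UL" "l \<in> U" using l by (auto simp: UL_def U_def J_def)
      have MJl: "M \<subseteq> J - {l}" using MJ False J_def by auto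
      have d1: "pos L l = card {j\<in>UL. j\<le>l} + card {j\<in>L \<inter> M. j<l}"
      proof -
        have "{j\<in>L. j\<le>l} = {j\<in>UL. j\<le>l} \<union> {j\<in>L \<inter> M. j<l}" "{j\<in>UL. j\<le>l} \<inter> {j\<in>L \<inter> M. j<l} = {}"
          using False by (auto simp: UL_def le_less)
        then show ?thesis unfolding pos_def by (metis card_Un_disjoint finite)
      qed
      have d2: "card {j\<in>UL. j\<le>l} = Suc (card {x\<in>UL. x<l})"
      proof -
        have "{j\<in>UL. j\<le>l} = insert l {x\<in>UL. x<l}" using lU by (auto simp: le_less)
        then show ?thesis by simp
      qed
      have ex: "(-1::'r) ^ (pos L l - 1 + (\<Sum>x\<in>U-{l}. g x)) = (-1) ^ (card {x\<in>UL. x<l} + (card MK + G))"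
        by (rule sgn_eq[where c="card MK"]) (use d1 d2 gL[OF l] EG[OF lU(2)] in linarith)
      have ex': "(-1::'r) ^ (pos L l - Suc 0) * (-1) ^ (\<Sum>x\<in>U-{l}. g x) = (-1) ^ card {x\<in>UL. x<l} * (-1) ^ (card MK + G)"
        using ex by (simp only: power_add One_nat_def)
      show ?thesis
      proof (cases "odd (card U - 1)")
        case True
        show ?thesis using MJl lU True unfolding common[OF lU(2)] V_def
          apply simp
          apply (subst mult.assoc[symmetric])
          apply (subst ex')
          apply (simp add: mult_ac)
          done
      next
        case False
        show ?thesis using MJl lU False unfolding common[OF lU(2)] V_def by simp
      qed
    qed
  qed
  have "(\<Sum>l\<in>L. (-1) ^ (pos L l - 1) * (if M \<subseteq> J - {l} then T (J-{l}) (J-{l}-M) else 0))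
      = (\<Sum>l\<in>L. if l \<in> UL then (-1) ^ card {x\<in>UL. x<l} * V else 0)"
    by (rule sum.cong[OF refl]) (rule term2)
  also have "\<dots> = (\<Sum>l\<in>L \<inter> UL. (-1) ^ card {x\<in>UL. x<l} * V)"
    by (simp add: sum.inter_restrict)
  also have "L \<inter> UL = UL" by (auto simp: UL_def)
  also have "(\<Sum>l\<in>UL. (-1) ^ card {x\<in>UL. x<l} * V) = (if odd (card UL) then 1 else 0) * V"
    by (simp add: sum_distrib_right[symmetric] alt_lt)
  finally have R2: "(\<Sum>l\<in>L. (-1) ^ (pos L l - 1) * (if M \<subseteq> J - {l} then T (J-{l}) (J-{l}-M) else 0))
      = (if odd (card UL) then 1 else 0) * V" .
  show ?thesis
    unfolding J_def[symmetric] R2 LHS V_def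
  proof (cases "odd (card UL)")
    case True
    then have "odd (card U - 1) \<longleftrightarrow> odd (card UK)" using cardU by (auto elim!: oddE)
    then show "(if odd (card UK) \<and> odd (card UL) then (-1) ^ (G + card MK) * (-q) ^ ((card U - 1 - 1) div 2) else 0) =
      (if odd (card UL) then 1 else 0) * (if odd (card U - 1) then (-1) ^ (card MK + G) * (-q) ^ ((card U - 1 - 1) div 2) else 0)"
      using True by (simp add: add.commute)
  qed simp
  qed
qed

lemma tau_val2: "tau_minus q (J::'s::{linorder,finite} set) w =
  (if sorted_wrt (<) w \<and> set w \<subseteq> J then Tc q J (J - set w) else 0)"
  unfolding tau_val Tc_def by auto

lemma prod_val:
  fixes K L :: "'s::{linorder,finite} set" and q :: "'r::comm_ring_1"
  assumes KL: "\<forall>k\<in>K. \<forall>l\<in>L. k < l"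
  shows "nc_mult (tau_minus q K) (tau_minus q L) w =
    (if sorted_wrt (<) w \<and> set w \<subseteq> K \<union> L then Tc q K (K - set w) * Tc q L (L - set w) else 0)"
proof -
  define C where "C = (\<lambda>i. sorted_wrt (<) (take i w) \<and> set (take i w) \<subseteq> K \<and> sorted_wrt (<) (drop i w) \<and> set (drop i w) \<subseteq> L)"
  have disj: "K \<inter> L = {}" using KL by auto
  have trm: "\<And>i. tau_minus q K (take i w) * tau_minus q L (drop i w) =
     (if C i then Tc q K (K - set (take i w)) * Tc q L (L - set (drop i w)) else 0)"
    unfolding tau_val2 C_def by auto
  have spl: "\<And>i. set w = set (take i w) \<union> set (drop i w)"
    by (metis append_take_drop_id set_append)
  have Cw: "\<And>i. C i \<Longrightarrow> sorted_wrt (<) w \<and> set w \<subseteq> K \<union> L"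
  proof -
    fix i assume c: "C i"
    have "sorted_wrt (<) (take i w @ drop i w)"
      unfolding sorted_wrt_append using c KL unfolding C_def by blast
    then show "sorted_wrt (<) w \<and> set w \<subseteq> K \<union> L" using c spl[of i] unfolding C_def by auto
  qed
  have nc: "nc_mult (tau_minus q K) (tau_minus q L) w =
      (\<Sum>i\<le>length w. if C i then Tc q K (K - set (take i w)) * Tc q L (L - set (drop i w)) else 0)"
    unfolding nc_mult_def trm ..
  show ?thesis
  proof (cases "sorted_wrt (<) w \<and> set w \<subseteq> K \<union> L")
    case False
    then have "\<And>i. \<not> C i" using Cw by blast
    then show ?thesis unfolding nc using False by auto
  next
    case True
    define i0 where "i0 = length (takeWhile (\<lambda>x. x \<in> K) w)"
    have i0len: "i0 \<le> length w" unfolding i0_def by (rule length_takeWhile_le)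
    have Ci0: "C i0"
    proof -
      have tk: "take i0 w = takeWhile (\<lambda>x. x \<in> K) w" unfolding i0_def by (rule takeWhile_eq_take[symmetric])
      have dp: "drop i0 w = dropWhile (\<lambda>x. x \<in> K) w" unfolding i0_def by (rule dropWhile_eq_drop[symmetric])
      have "set (take i0 w) \<subseteq> K" unfolding tk by (auto dest: set_takeWhileD)
      moreover have "set (drop i0 w) \<subseteq> L"
      proof (cases "dropWhile (\<lambda>x. x \<in> K) w")
        case Nil then show ?thesis unfolding dp Nil by simp
      next
        case (Cons d ds)
        then have wd: "w = takeWhile (\<lambda>x. x \<in> K) w @ d # ds" and dK: "d \<notin> K"
          by (simp_all add: dropWhile_eq_Cons_conv)
        have "d \<in> set w" using wd by (metis in_set_conv_decomp)
        then have dL: "d \<in> L" using True dK by auto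
        show ?thesis
        proof
          fix y assume "y \<in> set (drop i0 w)"
          then have y: "y \<in> set (d # ds)" using dp Cons by simp
          have yw: "y \<in> set w" using y wd by (metis set_append UnI2)
          have "sorted_wrt (<) (d # ds)" using True wd by (metis sorted_wrt_append)
          then have "y = d \<or> d < y" using y by auto
          then show "y \<in> L" using yw True dL KL by (metis UnE less_asym subsetD)
        qed
      qed
      ultimately show ?thesis unfolding C_def using True by (simp add: sorted_wrt_take sorted_wrt_drop)
    qed
    have uniq: "\<And>i j. i < j \<Longrightarrow> j \<le> length w \<Longrightarrow> C i \<Longrightarrow> C j \<Longrightarrow> False"
    proof -
      fix i j assume ij: "i < j" "j \<le> length w" and ci: "C i" and cj: "C j"
      have "w ! i = take j w ! i" using ij by simp
      moreover have "i < length (take j w)" using ij by simp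
      ultimately have "w ! i \<in> set (take j w)" by (metis nth_mem)
      then have a: "w ! i \<in> K" using cj unfolding C_def by auto
      have "w ! i \<in> set (drop i w)" using ij by (metis Cons_nth_drop_Suc list.set_intros(1) order.strict_trans2)
      then have b: "w ! i \<in> L" using ci unfolding C_def by auto
      show False using a b disj by auto
    qed
    have Ciff: "\<And>i. i \<le> length w \<Longrightarrow> C i \<longleftrightarrow> i = i0"
      using uniq Ci0 i0len by (metis linorder_neqE_nat)
    have "nc_mult (tau_minus q K) (tau_minus q L) w =
      (\<Sum>i\<le>length w. if i = i0 then Tc q K (K - set (take i w)) * Tc q L (L - set (drop i w)) else 0)"
      unfolding nc by (rule sum.cong[OF refl]) (simp add: Ciff)
    also have "\<dots> = Tc q K (K - set (take i0 w)) * Tc q L (L - set (drop i0 w))"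
      using i0len by simp
    also have "K - set (take i0 w) = K - set w"
      using Ci0 spl[of i0] disj unfolding C_def by auto
    also have "L - set (drop i0 w) = L - set w"
      using Ci0 spl[of i0] disj unfolding C_def by auto
    finally show ?thesis using True by simp
  qed
qed

lemma rhs_val:
  fixes K L X :: "'s::{linorder,finite} set" and q :: "'r::comm_ring_1"
  assumes "X \<subseteq> K \<union> L"
  shows "(\<Sum>k\<in>X. f k * tau_minus q ((K \<union> L) - {k}) w) =
    (if sorted_wrt (<) w \<and> set w \<subseteq> K \<union> L then
       (\<Sum>k\<in>X. f k * (if set w \<subseteq> K \<union> L - {k} then Tc q (K \<union> L - {k}) (K \<union> L - {k} - set w) else 0)) else 0)"
proof (cases "sorted_wrt (<) w \<and> set w \<subseteq> K \<union> L")
  case True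
  then show ?thesis unfolding tau_val2 by simp
next
  case False
  then have nk: "\<And>k. \<not> (sorted_wrt (<) w \<and> set w \<subseteq> K \<union> L - {k})" by auto
  have "(\<Sum>k\<in>X. f k * tau_minus q ((K \<union> L) - {k}) w) = 0"
    unfolding tau_val2 by (rule sum.neutral) (simp only: if_not_P[OF nk] mult_zero_right, blast)
  then show ?thesis unfolding if_not_P[OF False] .
qed

theorem lemma3p2:
  fixes K L :: "'s::{linorder,finite} set" and q :: "'r::comm_ring_1"
  assumes "\<forall>k\<in>K. \<forall>l\<in>L. k < l"
  shows "nc_mult (tau_minus q K) (tau_minus q L) =
           (\<lambda>w. \<Sum>i=1..card K. (-1) ^ (card K - i) *
              tau_minus q ((K \<union> L) - {sorted_list_of_set K ! (i - 1)}) w)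
       \<and> nc_mult (tau_minus q K) (tau_minus q L) =
           (\<lambda>w. \<Sum>i=1..card L. (-1) ^ (i - 1) *
              tau_minus q ((K \<union> L) - {sorted_list_of_set L ! (i - 1)}) w)"
proof (intro conjI ext)
  fix w
  have r1: "(\<Sum>i=1..card K. (-1) ^ (card K - i) * tau_minus q ((K \<union> L) - {sorted_list_of_set K ! (i - 1)}) w)
     = (\<Sum>k\<in>K. (-1) ^ (card K - pos K k) * tau_minus q ((K \<union> L) - {k}) w)"
    using reindex_K[where F="\<lambda>i k. (-1) ^ (card K - i) * tau_minus q ((K \<union> L) - {k}) w" and K=K] by simp
  show "nc_mult (tau_minus q K) (tau_minus q L) w =
           (\<Sum>i=1..card K. (-1) ^ (card K - i) *
              tau_minus q ((K \<union> L) - {sorted_list_of_set K ! (i - 1)}) w)"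
    unfolding r1 prod_val[OF assms] rhs_val[OF Un_upper1]
    using core(1)[OF assms, of "set w" q] by auto
next
  fix w
  have r2: "(\<Sum>i=1..card L. (-1) ^ (i - 1) * tau_minus q ((K \<union> L) - {sorted_list_of_set L ! (i - 1)}) w)
     = (\<Sum>l\<in>L. (-1) ^ (pos L l - 1) * tau_minus q ((K \<union> L) - {l}) w)"
    using reindex_K[where F="\<lambda>i l. (-1) ^ (i - 1) * tau_minus q ((K \<union> L) - {l}) w" and K=L] by simp
  show "nc_mult (tau_minus q K) (tau_minus q L) w =
           (\<Sum>i=1..card L. (-1) ^ (i - 1) *
              tau_minus q ((K \<union> L) - {sorted_list_of_set L ! (i - 1)}) w)"
    unfolding r2 prod_val[OF assms] rhs_val[OF Un_upper2]
    using core(2)[OF assms, of "set w" q] by auto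
qed

end
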